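(* Let $\underline\Omega=\{L\in\mathbb R^{m_2\times d}: Q-L^\top R^vL\succ0\}$. In general the problem is nonconvex-nonconcave: there exist problem data and $L\in\underline\Omega$ such that $\min_K\mathcal C(K,L)$ is a nonconvex minimization problem (the set of $K$ for which $(K,L)$ is stabilizing, equivalently $\mathcal C(K,L)<\infty$, is nonconvex), and there exist problem data and $K$ such that $\max_{L\in\underline\Omega}\mathcal C(K,L)$ is a nonconcave maximization problem (the set of $L\in\underline\Omega$ for which $(K,L)$ is stabilizing is nonconvex).
   Context: Zero-sum LQ game: $A\in\mathbb R^{d\times d}$, $B\in\mathbb R^{d\times m_1}$, $C\in\mathbb R^{d\times m_2}$, symmetric positive definite $Q,R^u,R^v$; dynamics $x_{t+1}=Ax_t+Bu_t+Cv_t$, cost $x_t^\top Qx_t+u_t^\top R^uu_t-v_t^\top R^vv_t$, initial state $x_0\sim\mathcal D$ with $\Sigma_0=\mathbb E[x_0x_0^\top]\succ0$. Linear feedback policies $u_t=-Kx_t$, $v_t=-Lx_t$ with $K\in\mathbb R^{m_1\times d}$, $L\in\mathbb R^{m_2\times d}$; $(K,L)$ is stabilizing if $\rho(A-BK-CL)<1$. For such policies $\mathcal C(K,L)=\mathbb E_{x_0\sim\mathcal D}\sum_{t\ge0}[x_t^\top Qx_t+(Kx_t)^\top R^u(Kx_t)-(Lx_t)^\top R^v(Lx_t)]$ (possibly infinite). *)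

theory Defs
  imports "Jordan_Normal_Form.Spectral_Radius"
begin

definition sym_posdef :: "real mat \<Rightarrow> nat \<Rightarrow> bool" where
  "sym_posdef M n \<longleftrightarrow> M \<in> carrier_mat n n \<and> transpose_mat M = M \<and>
     (\<forall>x \<in> carrier_vec n. x \<noteq> 0\<^sub>v n \<longrightarrow> 0 < x \<bullet> (M *\<^sub>v x))"

definition lq_data :: "nat \<Rightarrow> nat \<Rightarrow> nat \<Rightarrow> real mat \<Rightarrow> real mat \<Rightarrow> real mat \<Rightarrow>
    real mat \<Rightarrow> real mat \<Rightarrow> real mat \<Rightarrow> bool" where
  "lq_data d m1 m2 A B C Q Ru Rv \<longleftrightarrow>
     A \<in> carrier_mat d d \<and> B \<in> carrier_mat d m1 \<and> C \<in> carrier_mat d m2 \<and>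
     sym_posdef Q d \<and> sym_posdef Ru m1 \<and> sym_posdef Rv m2"

definition stabilizing :: "real mat \<Rightarrow> real mat \<Rightarrow> real mat \<Rightarrow> real mat \<Rightarrow> real mat \<Rightarrow> bool" where
  "stabilizing A B C K L \<longleftrightarrow>
     spectral_radius (map_mat complex_of_real (A - B * K - C * L)) < 1"

definition Omega_under :: "nat \<Rightarrow> nat \<Rightarrow> real mat \<Rightarrow> real mat \<Rightarrow> real mat set" where
  "Omega_under d m2 Q Rv = {L \<in> carrier_mat m2 d. sym_posdef (Q - transpose_mat L * Rv * L) d}"

definition convex_mat_set :: "real mat set \<Rightarrow> bool" where
  "convex_mat_set S \<longleftrightarrow> (\<forall>X\<in>S. \<forall>Y\<in>S. \<forall>t::real. 0 \<le> t \<and> t \<le> 1 \<longrightarrow>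
      t \<cdot>\<^sub>m X + (1 - t) \<cdot>\<^sub>m Y \<in> S)"

end

theory Submission imports Defs begin

lemma diag_posdef:
  assumes f: "\<And>i. i < n \<Longrightarrow> f i > 0"
  shows "sym_posdef (mat n n (\<lambda>(i,j). if i = j then f i else 0)) n"
proof -
  let ?M = "mat n n (\<lambda>(i,j). if i = j then f i else 0) :: real mat"
  have "\<forall>x \<in> carrier_vec n. x \<noteq> 0\<^sub>v n \<longrightarrow> 0 < x \<bullet> (?M *\<^sub>v x)"
  proof (intro ballI impI)
    fix x :: "real vec" assume x: "x \<in> carrier_vec n" and nz: "x \<noteq> 0\<^sub>v n"
    have Mx: "?M *\<^sub>v x = vec n (\<lambda>i. f i * x $ i)"
    proof (rule eq_vecI)
      fix i assume i: "i < dim_vec (vec n (\<lambda>i. f i * x $ i))"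
      hence i: "i < n" by simp
      have "row ?M i \<bullet> x = (\<Sum>j<n. (if i = j then f i else 0) * x $ j)"
        using x i by (simp add: scalar_prod_def lessThan_atLeast0)
      also have "\<dots> = f i * x $ i" using i
      proof -
        have "(\<Sum>j<n. (if i = j then f i else 0) * x $ j) = (\<Sum>j<n. if j = i then f i * x $ i else 0)"
          by (rule sum.cong) auto
        thus ?thesis using i by simp
      qed
      finally show "(?M *\<^sub>v x) $ i = vec n (\<lambda>i. f i * x $ i) $ i" using i by simp
    qed (use x in simp)
    have eq: "x \<bullet> (?M *\<^sub>v x) = (\<Sum>i\<in>{0..<n}. f i * (x $ i)^2)"
      unfolding Mx scalar_prod_def using x by (auto intro!: sum.cong simp: power2_eq_square)
    obtain k where k: "k < n" "x $ k \<noteq> 0" using nz x by (metis eq_vecI carrier_vecD index_zero_vec dim_vec)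
    have "0 < f k * (x $ k)^2" using f k by simp
    also have "\<dots> \<le> (\<Sum>i\<in>{0..<n}. f i * (x $ i)^2)"
    proof (rule member_le_sum)
      show "\<And>i. i \<in> {0..<n} - {k} \<Longrightarrow> 0 \<le> f i * (x $ i)^2"
        using f by (simp add: less_imp_le)
    qed (use k in auto)
    finally show "0 < x \<bullet> (?M *\<^sub>v x)" unfolding eq .
  qed
  moreover have "transpose_mat ?M = ?M" by (auto intro!: eq_matI)
  ultimately show ?thesis unfolding sym_posdef_def by auto
qed

lemma nilp_sr:
  assumes M: "(M::complex mat) \<in> carrier_mat n n" and n: "n > 0" and MM: "M * M = 0\<^sub>m n n"
  shows "spectral_radius M = 0"
proof -
  have "spectrum M \<subseteq> {0}"
  proof
    fix k assume "k \<in> spectrum M"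
    then obtain v where v: "v \<in> carrier_vec n" "v \<noteq> 0\<^sub>v n" "M *\<^sub>v v = k \<cdot>\<^sub>v v"
      unfolding spectrum_def eigenvalue_def eigenvector_def using M by auto
    have "0\<^sub>v n = (M * M) *\<^sub>v v" using MM v by auto
    also have "\<dots> = M *\<^sub>v (M *\<^sub>v v)" using M v by (simp add: assoc_mult_mat_vec)
    also have "\<dots> = k \<cdot>\<^sub>v (k \<cdot>\<^sub>v v)" using M v by (simp add: mult_mat_vec)
    also have "\<dots> = (k*k) \<cdot>\<^sub>v v" by (simp add: smult_smult_assoc)
    finally have kv: "(k*k) \<cdot>\<^sub>v v = 0\<^sub>v n" by simp
    obtain j where j: "j < n" "v $ j \<noteq> 0" using v by (metis eq_vecI carrier_vecD index_zero_vec dim_vec)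
    have "((k*k) \<cdot>\<^sub>v v) $ j = 0\<^sub>v n $ j" using kv by simp
    hence "(k*k) * v $ j = 0" using j v by simp
    hence "k*k = 0" using j by simp
    thus "k \<in> {0}" by simp
  qed
  moreover have "spectral_radius M \<in> norm ` spectrum M" by (rule spectral_radius_mem_max(1)[OF M n])
  ultimately show ?thesis by auto
qed

lemma ev_sr:
  assumes M: "(M::complex mat) \<in> carrier_mat n n" and n: "n > 0" and ev: "eigenvector M v k"
  shows "norm k \<le> spectral_radius M"
  using spectral_radius_mem_max(2)[OF M n] ev unfolding spectrum_def eigenvalue_def by auto


lemma nonconvex_witness:
  assumes "X \<in> S" "Y \<in> S" "(1/2) \<cdot>\<^sub>m X + (1 - 1/2) \<cdot>\<^sub>m Y \<notin> S"
  shows "\<not> convex_mat_set S"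
proof
  assume "convex_mat_set S"
  hence H: "\<And>t. 0 \<le> t \<Longrightarrow> t \<le> 1 \<Longrightarrow> t \<cdot>\<^sub>m X + (1 - t) \<cdot>\<^sub>m Y \<in> S" using assms(1,2) unfolding convex_mat_set_def by auto
  from H[of "1/2"] assms(3) show False by simp
qed

definition E12 :: "real mat" where "E12 = mat 2 2 (\<lambda>(i,j). if i = 0 \<and> j = 1 then 2 else 0)"
definition E21 :: "real mat" where "E21 = mat 2 2 (\<lambda>(i,j). if i = 1 \<and> j = 0 then 2 else 0)"

lemma E_carrier: "E12 \<in> carrier_mat 2 2" "E21 \<in> carrier_mat 2 2"
  unfolding E12_def E21_def by auto

lemma sum2: "(\<Sum>i\<in>{0..<2::nat}. g i) = g 0 + g 1"
  by (simp add: numeral_2_eq_2)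

lemma closed_loop:
  assumes K: "(K :: real mat) \<in> carrier_mat 2 2"
  shows "0\<^sub>m 2 2 - K - 0\<^sub>m 2 2 = mat 2 2 (\<lambda>ij. - K $$ ij)"
    and "0\<^sub>m 2 2 - 0\<^sub>m 2 2 - K = mat 2 2 (\<lambda>ij. - K $$ ij)"
  using K by (auto intro!: eq_matI)

lemma stab_E12: "spectral_radius (map_mat complex_of_real (mat 2 2 (\<lambda>ij. - E12 $$ ij))) < 1"
proof -
  let ?N = "map_mat complex_of_real (mat 2 2 (\<lambda>ij. - E12 $$ ij))"
  have "?N * ?N = 0\<^sub>m 2 2"
    by (rule eq_matI) (auto simp: E12_def scalar_prod_def sum2 less_2_cases_iff)
  hence "spectral_radius ?N = 0" by (intro nilp_sr[of _ 2]) auto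
  thus ?thesis by simp
qed

lemma stab_E21: "spectral_radius (map_mat complex_of_real (mat 2 2 (\<lambda>ij. - E21 $$ ij))) < 1"
proof -
  let ?N = "map_mat complex_of_real (mat 2 2 (\<lambda>ij. - E21 $$ ij))"
  have "?N * ?N = 0\<^sub>m 2 2"
    by (rule eq_matI) (auto simp: E21_def scalar_prod_def sum2 less_2_cases_iff)
  hence "spectral_radius ?N = 0" by (intro nilp_sr[of _ 2]) auto
  thus ?thesis by simp
qed

lemma unstab_mid:
  "\<not> spectral_radius (map_mat complex_of_real (mat 2 2 (\<lambda>ij. - ((1/2) \<cdot>\<^sub>m E12 + (1 - 1/2) \<cdot>\<^sub>m E21) $$ ij))) < 1"
proof -
  let ?N = "map_mat complex_of_real (mat 2 2 (\<lambda>ij. - ((1/2) \<cdot>\<^sub>m E12 + (1 - 1/2) \<cdot>\<^sub>m E21) $$ ij))"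
  let ?v = "vec 2 (\<lambda>i. if i = 0 then 1 else - 1) :: complex vec"
  have "?v $ 0 \<noteq> 0\<^sub>v 2 $ 0" by simp
  hence nz: "?v \<noteq> 0\<^sub>v 2" by metis
  have "?N *\<^sub>v ?v = 1 \<cdot>\<^sub>v ?v"
    by (rule eq_vecI) (auto simp: E12_def E21_def scalar_prod_def sum2 less_2_cases_iff)
  hence "eigenvector ?N ?v 1" unfolding eigenvector_def using nz by auto
  from ev_sr[OF _ _ this, of 2] have "1 \<le> spectral_radius ?N" by simp
  thus ?thesis by simp
qed

lemma id_posdef: "sym_posdef (1\<^sub>m n) n"
proof -
  have "1\<^sub>m n = (mat n n (\<lambda>(i,j). if i = j then 1 else 0) :: real mat)"
    by (auto intro!: eq_matI)
  thus ?thesis using diag_posdef[of n "\<lambda>_. 1"] by simp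
qed

definition Q10 :: "real mat" where "Q10 = mat 2 2 (\<lambda>(i,j). if i = j then 10 else 0)"

lemma Q10_posdef: "sym_posdef Q10 2"
  unfolding Q10_def by (rule diag_posdef) simp

lemma omega_E12: "E12 \<in> Omega_under 2 2 Q10 (1\<^sub>m 2)"
proof -
  have "Q10 - transpose_mat E12 * 1\<^sub>m 2 * E12 = mat 2 2 (\<lambda>(i,j). if i = j then (if i = 0 then 10 else 6) else 0)"
    by (rule eq_matI) (auto simp: Q10_def E12_def scalar_prod_def sum2 less_2_cases_iff)
  moreover have "sym_posdef (mat 2 2 (\<lambda>(i,j). if i = j then (if i = 0 then 10 else 6) else (0::real))) 2"
    by (rule diag_posdef) simp
  ultimately show ?thesis unfolding Omega_under_def using E_carrier by auto
qed

lemma omega_E21: "E21 \<in> Omega_under 2 2 Q10 (1\<^sub>m 2)"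
proof -
  have "Q10 - transpose_mat E21 * 1\<^sub>m 2 * E21 = mat 2 2 (\<lambda>(i,j). if i = j then (if i = 0 then 6 else 10) else 0)"
    by (rule eq_matI) (auto simp: Q10_def E21_def scalar_prod_def sum2 less_2_cases_iff)
  moreover have "sym_posdef (mat 2 2 (\<lambda>(i,j). if i = j then (if i = 0 then 6 else 10) else (0::real))) 2"
    by (rule diag_posdef) simp
  ultimately show ?thesis unfolding Omega_under_def using E_carrier by auto
qed

theorem lemma2:
  shows "(\<exists>d m1 m2 A B C Q Ru Rv L. lq_data d m1 m2 A B C Q Ru Rv \<and>
            L \<in> Omega_under d m2 Q Rv \<and>
            \<not> convex_mat_set {K \<in> carrier_mat m1 d. stabilizing A B C K L}) \<and>
         (\<exists>d m1 m2 A B C Q Ru Rv K. lq_data d m1 m2 A B C Q Ru Rv \<and>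
            K \<in> carrier_mat m1 d \<and>
            \<not> convex_mat_set {L \<in> Omega_under d m2 Q Rv. stabilizing A B C K L})"
proof
  let ?S = "{K \<in> carrier_mat 2 2. stabilizing (0\<^sub>m 2 2) (1\<^sub>m 2) (0\<^sub>m 2 1) K (0\<^sub>m 1 2)}"
  have mid: "(1/2) \<cdot>\<^sub>m E12 + (1 - 1/2) \<cdot>\<^sub>m E21 \<in> carrier_mat 2 2" using E_carrier by auto
  have "\<not> convex_mat_set ?S"
  proof (rule nonconvex_witness[of E12 _ E21])
    show "E12 \<in> ?S" using E_carrier stab_E12 unfolding stabilizing_def by (simp add: closed_loop)
    show "E21 \<in> ?S" using E_carrier stab_E21 unfolding stabilizing_def by (simp add: closed_loop)
    show "(1/2) \<cdot>\<^sub>m E12 + (1 - 1/2) \<cdot>\<^sub>m E21 \<notin> ?S"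
    proof -
      have "0\<^sub>m 2 2 - 1\<^sub>m 2 * ((1/2) \<cdot>\<^sub>m E12 + (1 - 1/2) \<cdot>\<^sub>m E21) - 0\<^sub>m 2 1 * 0\<^sub>m 1 2
          = mat 2 2 (\<lambda>ij. - ((1/2) \<cdot>\<^sub>m E12 + (1 - 1/2) \<cdot>\<^sub>m E21) $$ ij)"
        unfolding left_mult_one_mat[OF mid] by (rule eq_matI) (use mid E_carrier in \<open>auto simp: E12_def E21_def\<close>)
      thus ?thesis using unstab_mid unfolding stabilizing_def by simp
    qed
  qed
  moreover have "lq_data 2 2 1 (0\<^sub>m 2 2) (1\<^sub>m 2) (0\<^sub>m 2 1) (1\<^sub>m 2) (1\<^sub>m 2) (1\<^sub>m 1)"
    unfolding lq_data_def using id_posdef by auto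
  moreover have "0\<^sub>m 1 2 \<in> Omega_under 2 1 (1\<^sub>m 2) (1\<^sub>m 1)"
  proof -
    have "1\<^sub>m 2 - transpose_mat (0\<^sub>m 1 2) * 1\<^sub>m 1 * 0\<^sub>m 1 2 = (1\<^sub>m 2 :: real mat)"
      by (rule eq_matI) auto
    thus ?thesis unfolding Omega_under_def using id_posdef by auto
  qed
  ultimately show "\<exists>d m1 m2 A B C Q Ru Rv L. lq_data d m1 m2 A B C Q Ru Rv \<and>
            L \<in> Omega_under d m2 Q Rv \<and>
            \<not> convex_mat_set {K \<in> carrier_mat m1 d. stabilizing A B C K L}" by blast
next
  let ?S = "{L \<in> Omega_under 2 2 Q10 (1\<^sub>m 2). stabilizing (0\<^sub>m 2 2) (0\<^sub>m 2 1) (1\<^sub>m 2) (0\<^sub>m 1 2) L}"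
  have mid: "(1/2) \<cdot>\<^sub>m E12 + (1 - 1/2) \<cdot>\<^sub>m E21 \<in> carrier_mat 2 2" using E_carrier by auto
  have "\<not> convex_mat_set ?S"
  proof (rule nonconvex_witness[of E12 _ E21])
    show "E12 \<in> ?S" using E_carrier stab_E12 omega_E12 unfolding stabilizing_def by (simp add: closed_loop)
    show "E21 \<in> ?S" using E_carrier stab_E21 omega_E21 unfolding stabilizing_def by (simp add: closed_loop)
    show "(1/2) \<cdot>\<^sub>m E12 + (1 - 1/2) \<cdot>\<^sub>m E21 \<notin> ?S"
    proof -
      have "0\<^sub>m 2 2 - 0\<^sub>m 2 1 * 0\<^sub>m 1 2 - 1\<^sub>m 2 * ((1/2) \<cdot>\<^sub>m E12 + (1 - 1/2) \<cdot>\<^sub>m E21)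
          = mat 2 2 (\<lambda>ij. - ((1/2) \<cdot>\<^sub>m E12 + (1 - 1/2) \<cdot>\<^sub>m E21) $$ ij)"
        unfolding left_mult_one_mat[OF mid] by (rule eq_matI) (use mid E_carrier in \<open>auto simp: E12_def E21_def\<close>)
      thus ?thesis using unstab_mid unfolding stabilizing_def by simp
    qed
  qed
  moreover have "lq_data 2 1 2 (0\<^sub>m 2 2) (0\<^sub>m 2 1) (1\<^sub>m 2) Q10 (1\<^sub>m 1) (1\<^sub>m 2)"
    unfolding lq_data_def using id_posdef Q10_posdef by auto
  ultimately show "\<exists>d m1 m2 A B C Q Ru Rv K. lq_data d m1 m2 A B C Q Ru Rv \<and>
            K \<in> carrier_mat m1 d \<and>
            \<not> convex_mat_set {L \<in> Omega_under d m2 Q Rv. stabilizing A B C K L}"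
    by (metis zero_carrier_mat)
qed
end
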